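(* There exists an invertible $25\times25$ binary matrix $A'$ such that the linear kernel $g({\bf u})={\bf u}A'$ has partial distance sequence $(1,2,2,2,2,2,4,4,4,4,4,4,4,8,8,8,8,8,8,8,12,12,12,16,16)$. Consequently $E_{25}\ge\frac1{25}\sum_{i=0}^{24}\log_{25}D_{min}^{(i)}\approx0.50608$.
   Context: A kernel of dimension $\ell$ is a bijection $g:\{0,1\}^\ell\to\{0,1\}^\ell$; a linear kernel is $g({\bf u})={\bf u}G$ over $\mathbb{F}_2$ for an invertible $\ell\times\ell$ binary matrix $G$. ${\bf a}\bullet{\bf b}$ denotes concatenation, $d_H$ Hamming distance. Partial distances: $D_{min}^{(i)}=\min\{d_H(g({\bf w}\bullet 0\bullet{\bf u}),g({\bf w}\bullet 1\bullet {\bf v})) : {\bf w}\in\{0,1\}^i,\ {\bf u},{\bf v}\in\{0,1\}^{\ell-i-1}\}$, $i=0,\dots,\ell-1$; exponent $E(g)=\frac1\ell\sum_{i}\log_\ell D_{min}^{(i)}$; $E_\ell=\max_g E(g)$ over all kernels of dimension $\ell$. *)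

theory Defs
  imports Complex_Main
begin

text \<open>Binary vectors of length l are bool lists of length l (True = 1).
  A binary l x l matrix is a function G :: nat => nat => bool, entry G i j
  for i, j < l (row i, column j). Arithmetic is over F_2 (sum = parity).\<close>

definition bvecs :: "nat \<Rightarrow> bool list set" where
  "bvecs l = {xs. length xs = l}"

definition hamming :: "bool list \<Rightarrow> bool list \<Rightarrow> nat" where
  "hamming xs ys = card {k. k < length xs \<and> xs ! k \<noteq> ys ! k}"

definition vec_mat :: "nat \<Rightarrow> bool list \<Rightarrow> (nat \<Rightarrow> nat \<Rightarrow> bool) \<Rightarrow> bool list" where
  "vec_mat l u G = map (\<lambda>j. odd (card {i. i < l \<and> u ! i \<and> G i j})) [0..<l]"

definition mat_mult2 :: "nat \<Rightarrow> (nat \<Rightarrow> nat \<Rightarrow> bool) \<Rightarrow> (nat \<Rightarrow> nat \<Rightarrow> bool) \<Rightarrow> (nat \<Rightarrow> nat \<Rightarrow> bool)" where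
  "mat_mult2 l G H = (\<lambda>i j. odd (card {k. k < l \<and> G i k \<and> H k j}))"

definition invertible2 :: "nat \<Rightarrow> (nat \<Rightarrow> nat \<Rightarrow> bool) \<Rightarrow> bool" where
  "invertible2 l G \<longleftrightarrow> (\<exists>H. \<forall>i<l. \<forall>j<l.
      mat_mult2 l G H i j = (i = j) \<and> mat_mult2 l H G i j = (i = j))"

definition lin_kernel :: "nat \<Rightarrow> (nat \<Rightarrow> nat \<Rightarrow> bool) \<Rightarrow> bool list \<Rightarrow> bool list" where
  "lin_kernel l G = (\<lambda>u. vec_mat l u G)"

definition partial_dist :: "nat \<Rightarrow> (bool list \<Rightarrow> bool list) \<Rightarrow> nat \<Rightarrow> nat" where
  "partial_dist l g i = Min {hamming (g (w @ [False] @ u)) (g (w @ [True] @ v)) | w u v.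
      length w = i \<and> length u = l - i - 1 \<and> length v = l - i - 1}"

definition kernel :: "nat \<Rightarrow> (bool list \<Rightarrow> bool list) \<Rightarrow> bool" where
  "kernel l g \<longleftrightarrow> bij_betw g (bvecs l) (bvecs l)"

definition kernel_exponent :: "nat \<Rightarrow> (bool list \<Rightarrow> bool list) \<Rightarrow> real" where
  "kernel_exponent l g = (1 / real l) * (\<Sum>i<l. log (real l) (real (partial_dist l g i)))"

text \<open>E_l = max of E(g) over all kernels of dimension l (the set of values is finite,
  since E(g) only depends on g restricted to bvecs l).\<close>
definition max_exponent :: "nat \<Rightarrow> real" where
  "max_exponent l = Max {kernel_exponent l g | g. kernel l g}"

definition D25 :: "nat list" where
  "D25 = [1,2,2,2,2,2,4,4,4,4,4,4,4,8,8,8,8,8,8,8,12,12,12,16,16]"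

end

theory Submission
  imports Defs "HOL-Library.FuncSet"
begin

fun xorv :: "bool list \<Rightarrow> bool list \<Rightarrow> bool list" where
  "xorv (a#as) (b#bs) = (a \<noteq> b) # xorv as bs"
| "xorv _ _ = []"

definition wt :: "bool list \<Rightarrow> nat" where "wt xs = length (filter id xs)"

fun sumrows :: "nat \<Rightarrow> bool list \<Rightarrow> bool list list \<Rightarrow> bool list" where
  "sumrows n (b#bs) (r#rs) = (if b then xorv r (sumrows n bs rs) else sumrows n bs rs)"
| "sumrows n _ _ = replicate n False"

fun mw :: "bool list \<Rightarrow> bool list list \<Rightarrow> nat" where
  "mw v [] = wt v"
| "mw v (r#rs) = min (mw v rs) (mw (xorv v r) rs)"

fun chk :: "bool list list \<Rightarrow> bool list \<Rightarrow> nat \<Rightarrow> bool list \<Rightarrow> bool" where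
  "chk [] acc k tg = (acc \<noteq> tg)"
| "chk (c#cs) acc k tg = (chk cs acc k tg \<and> (k = 0 \<or> chk cs (xorv acc c) (k - 1) tg))"

definition Am :: "bool list list \<Rightarrow> nat \<Rightarrow> nat \<Rightarrow> bool" where
  "Am R = (\<lambda>k j. R!k!j)"

definition Idl :: "nat \<Rightarrow> bool list list" where
  "Idl n = map (\<lambda>i. map (\<lambda>j. i = j) [0..<n]) [0..<n]"

definition Rl :: "bool list list" where
"Rl = [
  [True,False,False,False,False,False,False,False,False,False,False,False,False,False,False,False,False,False,False,False,False,False,False,False,False],
  [True,False,False,False,True,True,False,False,True,True,False,True,False,True,False,False,True,False,True,False,False,True,False,True,True],
  [True,False,True,False,False,False,True,True,False,False,False,True,False,False,True,False,False,True,True,False,True,False,True,False,False],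
  [False,False,True,False,True,True,False,True,False,True,True,True,False,True,False,False,True,True,False,True,True,True,False,True,False],
  [True,False,True,True,False,False,True,False,False,True,True,False,False,False,True,True,False,True,True,True,False,False,True,False,False],
  [True,False,True,False,True,False,True,False,True,True,False,True,True,True,True,False,True,True,False,True,False,True,False,False,False],
  [True,False,False,True,True,False,True,False,True,False,False,False,False,False,False,True,True,False,True,False,False,True,True,False,False],
  [True,True,True,True,False,False,True,False,False,False,False,True,True,True,True,True,False,True,False,True,True,True,False,True,True],
  [True,False,True,False,False,True,True,True,False,True,True,True,False,True,True,True,True,False,False,True,False,True,False,True,True],
  [False,True,False,False,True,False,False,True,True,False,True,True,True,False,True,False,False,True,True,True,True,True,True,True,True],
  [True,False,True,False,True,False,True,False,False,True,True,True,False,False,False,True,False,True,True,False,False,True,False,False,True],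
  [True,True,True,False,False,True,True,False,False,False,True,False,False,False,True,False,True,True,False,True,False,False,True,True,False],
  [False,False,True,False,True,False,True,False,True,True,True,True,True,True,False,False,False,True,False,False,False,False,True,True,False],
  [True,True,True,True,False,False,True,True,False,False,True,True,False,False,True,False,False,False,True,False,True,False,False,True,False],
  [False,False,True,True,True,True,True,False,True,False,True,True,False,False,True,True,False,False,True,False,True,False,False,False,False],
  [False,False,False,True,True,True,True,True,False,False,True,True,False,False,False,False,True,True,False,False,False,True,True,True,False],
  [True,True,False,True,False,False,True,True,True,False,True,True,True,False,True,False,True,False,True,True,True,True,True,False,False],
  [False,False,False,True,False,True,True,True,True,True,True,True,True,False,True,True,False,True,True,True,True,True,False,False,False],
  [False,True,False,True,True,True,True,False,False,True,False,False,True,False,False,False,True,False,True,True,True,False,False,True,False],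
  [True,True,True,False,False,True,True,False,False,True,True,True,False,False,False,True,True,False,False,True,False,True,False,False,False],
  [True,False,True,True,False,True,False,True,True,True,False,False,False,False,False,True,True,True,False,False,True,False,False,True,False],
  [True,True,False,False,False,False,True,False,True,True,True,False,True,False,True,False,True,False,True,False,True,False,False,True,False],
  [False,True,True,True,True,False,False,True,True,False,True,True,False,False,True,False,True,False,False,True,True,False,False,False,False],
  [True,True,False,True,False,False,True,True,False,True,True,True,True,True,False,True,True,True,False,True,True,True,False,False,False],
  [True,False,True,True,True,True,False,False,True,False,True,False,True,True,True,True,False,False,True,True,True,False,True,True,False]]"

definition Sl :: "bool list list" where
"Sl = [
  [True,False,False,False,False,False,False,False,False,False,False,False,False,False,False,False,False,False,False,False,False,False,False,False,False],
  [True,True,False,True,True,False,False,True,True,True,False,True,True,True,True,False,True,True,True,True,True,True,True,False,True],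
  [True,True,True,True,False,True,False,True,True,False,True,True,True,False,False,True,False,False,False,True,False,True,False,False,False],
  [True,False,False,True,True,False,False,False,True,False,True,False,True,False,True,True,False,False,False,False,True,False,False,False,True],
  [True,True,True,True,False,False,True,False,False,False,True,True,False,False,True,True,True,False,True,True,False,False,True,True,True],
  [True,True,False,False,False,False,False,False,True,True,True,True,False,True,False,False,True,False,True,False,False,True,True,True,True],
  [True,True,False,False,False,True,True,False,True,False,False,True,False,False,False,False,False,True,False,False,False,True,True,True,False],
  [True,True,True,False,False,True,True,True,True,True,False,False,False,True,False,True,False,True,False,False,False,False,True,False,False],
  [True,True,True,False,True,True,True,True,True,False,True,False,False,True,False,False,True,True,True,False,False,True,True,False,False],
  [True,False,False,True,False,True,False,True,True,False,False,False,True,True,True,True,False,False,False,False,False,False,True,True,False],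
  [True,False,False,True,False,False,True,False,True,True,False,True,True,False,False,False,True,False,True,True,False,True,False,False,True],
  [True,True,False,True,True,True,True,True,False,True,True,False,True,True,True,True,True,True,False,True,False,True,True,True,False],
  [True,False,True,True,False,False,True,True,True,True,True,False,False,True,False,True,True,True,True,True,True,True,True,False,True],
  [True,False,True,True,False,True,True,False,True,True,False,False,False,False,True,False,True,True,False,True,True,False,True,False,False],
  [True,False,True,True,True,True,True,True,False,False,True,False,True,True,False,False,False,False,True,True,True,False,False,False,False],
  [True,False,True,False,True,True,True,True,False,False,True,False,False,False,False,True,False,False,False,True,False,False,False,False,False],
  [True,False,False,True,True,True,False,False,False,True,True,True,False,False,True,False,True,False,False,True,False,True,True,False,False],
  [True,False,False,False,False,True,True,True,False,True,False,False,True,True,True,True,True,False,True,False,False,True,False,False,True],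
  [True,True,True,False,False,False,True,True,False,False,False,True,False,False,True,False,True,False,False,False,True,False,True,False,False],
  [True,True,True,False,True,False,False,False,False,False,True,True,True,True,False,False,False,True,False,True,False,False,True,False,False],
  [True,True,False,False,True,False,False,False,False,True,False,False,True,False,True,True,False,True,True,False,True,False,False,False,False],
  [True,False,True,False,True,False,False,True,False,True,False,True,False,True,False,False,True,False,True,False,True,True,True,False,True],
  [True,False,True,True,True,False,False,False,True,False,True,True,True,False,False,True,True,False,True,True,True,False,False,False,True],
  [True,True,False,False,True,True,False,False,False,True,False,True,True,True,True,True,False,True,False,True,True,True,True,False,True],
  [True,True,True,True,True,False,True,True,False,False,True,False,True,False,True,False,False,False,False,True,False,False,False,False,False]]"

definition cols0 :: "bool list list" where
"cols0 = [
  [True],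
  [True],
  [True],
  [True],
  [True],
  [True],
  [True],
  [True],
  [True],
  [True],
  [True],
  [True],
  [True],
  [True],
  [True],
  [True],
  [True],
  [True],
  [True],
  [True],
  [True],
  [True],
  [True],
  [True],
  [True]]"

definition cols1 :: "bool list list" where
"cols1 = [
  [True,False],
  [False,True],
  [False,True],
  [True,False],
  [False,True],
  [False,True],
  [False,True],
  [False,True],
  [False,True],
  [True,False],
  [True,False],
  [False,True],
  [True,False],
  [True,False],
  [True,False],
  [True,False],
  [True,False],
  [True,False],
  [False,True],
  [False,True],
  [False,True],
  [True,False],
  [True,False],
  [False,True],
  [False,True]]"

definition cols2 :: "bool list list" where
"cols2 = [
  [True,False,False],
  [False,True,False],
  [False,False,True],
  [True,False,False],
  [False,False,True],
  [False,True,False],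
  [False,True,False],
  [False,False,True],
  [False,False,True],
  [True,False,False],
  [True,False,False],
  [False,True,False],
  [True,True,True],
  [True,True,True],
  [True,True,True],
  [True,True,True],
  [True,False,False],
  [True,False,False],
  [False,False,True],
  [False,False,True],
  [False,True,False],
  [True,True,True],
  [True,True,True],
  [False,True,False],
  [False,False,True]]"

definition cols3 :: "bool list list" where
"cols3 = [
  [True,False,False,False],
  [False,True,False,False],
  [False,False,True,False],
  [False,False,False,True],
  [False,False,True,False],
  [True,True,False,True],
  [True,True,False,True],
  [True,False,True,True],
  [True,False,True,True],
  [False,False,False,True],
  [False,False,False,True],
  [False,True,False,False],
  [False,True,True,True],
  [False,True,True,True],
  [False,True,True,True],
  [True,True,True,False],
  [False,False,False,True],
  [True,False,False,False],
  [True,False,True,True],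
  [True,False,True,True],
  [True,True,False,True],
  [True,True,True,False],
  [False,True,True,True],
  [True,True,False,True],
  [False,False,True,False]]"

definition cols4 :: "bool list list" where
"cols4 = [
  [True,False,False,False,False],
  [False,True,False,False,False],
  [False,False,True,False,False],
  [False,False,False,True,False],
  [False,False,True,False,False],
  [True,True,False,True,False],
  [True,True,False,True,False],
  [False,False,False,False,True],
  [True,False,True,True,False],
  [True,False,True,False,True],
  [True,False,True,False,True],
  [False,True,False,False,False],
  [False,True,True,True,False],
  [False,True,True,True,False],
  [True,True,False,False,True],
  [True,True,True,False,False],
  [False,False,False,True,False],
  [True,False,False,False,False],
  [False,False,False,False,True],
  [True,False,True,True,False],
  [False,True,True,False,True],
  [True,True,True,False,False],
  [True,True,False,False,True],
  [False,True,True,False,True],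
  [True,False,False,True,True]]"

definition cols5 :: "bool list list" where
"cols5 = [
  [True,False,False,False,False,False],
  [False,True,False,False,False,False],
  [False,False,True,False,False,False],
  [False,False,False,True,False,False],
  [False,False,False,False,True,False],
  [True,True,False,True,False,False],
  [True,True,True,True,True,False],
  [False,False,False,False,False,True],
  [True,False,True,True,False,False],
  [True,False,False,False,True,True],
  [True,False,True,False,False,True],
  [False,True,True,False,True,False],
  [False,True,False,True,True,False],
  [False,True,True,True,False,False],
  [True,True,False,False,False,True],
  [True,True,True,False,False,False],
  [False,False,True,True,True,False],
  [True,False,True,False,True,False],
  [False,False,True,False,True,True],
  [True,False,False,True,True,False],
  [False,True,True,False,False,True],
  [True,True,False,False,True,False],
  [True,True,True,False,True,True],
  [False,True,False,False,True,True],
  [True,False,True,True,True,True]]"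

definition cols6 :: "bool list list" where
"cols6 = [
  [True,False,False,False,False,False,False],
  [False,True,False,False,False,False,False],
  [False,False,True,False,False,False,False],
  [False,False,False,True,False,False,False],
  [False,False,False,False,True,False,False],
  [True,True,False,True,False,False,False],
  [True,True,True,True,True,False,False],
  [False,False,False,False,False,True,False],
  [False,False,False,False,False,False,True],
  [True,False,False,False,True,True,False],
  [True,False,True,False,False,True,False],
  [False,True,True,False,True,False,False],
  [False,True,False,True,True,False,False],
  [True,True,False,False,False,False,True],
  [True,True,False,False,False,True,False],
  [False,True,False,True,False,False,True],
  [True,False,False,False,True,False,True],
  [True,False,True,False,True,False,False],
  [True,False,False,True,True,True,True],
  [False,False,True,False,True,False,True],
  [True,True,False,True,False,True,True],
  [False,True,True,True,True,False,True],
  [True,True,True,False,True,True,False],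
  [False,True,False,False,True,True,False],
  [False,False,False,False,True,True,True]]"

definition cols7 :: "bool list list" where
"cols7 = [
  [True,False,False,False,False,False,False,False],
  [False,True,False,False,False,False,False,False],
  [False,False,True,False,False,False,False,False],
  [False,False,False,True,False,False,False,False],
  [False,False,False,False,True,False,False,False],
  [False,False,False,False,False,True,False,False],
  [True,True,True,True,True,False,False,False],
  [False,False,False,False,False,False,True,False],
  [False,False,False,False,False,False,False,True],
  [True,False,False,False,True,False,True,False],
  [True,False,True,False,False,False,True,False],
  [True,False,True,True,True,True,False,False],
  [False,True,False,True,True,False,False,False],
  [True,True,False,False,False,False,False,True],
  [False,False,False,True,False,True,True,False],
  [True,False,False,False,False,True,False,True],
  [False,True,False,True,True,True,False,True],
  [True,False,True,False,True,False,False,False],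
  [False,True,False,False,True,True,True,True],
  [False,False,True,False,True,False,False,True],
  [False,False,False,False,False,True,True,True],
  [False,True,True,True,True,False,False,True],
  [False,False,True,True,True,True,True,False],
  [False,True,False,False,True,False,True,False],
  [True,True,False,True,True,True,True,True]]"

definition cols8 :: "bool list list" where
"cols8 = [
  [True,False,False,False,False,False,False,False,False],
  [False,True,False,False,False,False,False,False,False],
  [False,False,True,False,False,False,False,False,False],
  [False,False,False,True,False,False,False,False,False],
  [False,False,False,False,True,False,False,False,False],
  [False,False,False,False,False,True,False,False,False],
  [True,True,True,True,True,False,False,False,False],
  [False,False,False,False,False,False,True,False,False],
  [False,False,False,False,False,False,False,True,False],
  [True,False,False,False,True,False,True,False,False],
  [False,False,False,False,False,False,False,False,True],
  [False,False,False,True,True,True,True,False,True],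
  [True,True,True,True,True,False,True,False,True],
  [False,True,True,False,False,False,True,True,True],
  [True,False,True,True,False,True,False,False,True],
  [True,False,False,False,False,True,False,True,False],
  [False,True,False,True,True,True,False,True,False],
  [False,False,False,False,True,False,True,False,True],
  [False,True,False,False,True,True,True,True,False],
  [False,False,True,False,True,False,False,True,False],
  [True,False,True,False,False,True,False,True,True],
  [False,True,True,True,True,False,False,True,False],
  [True,False,False,True,True,True,False,False,True],
  [False,True,False,False,True,False,True,False,False],
  [False,True,True,True,True,True,False,True,True]]"

definition cols9 :: "bool list list" where
"cols9 = [
  [True,False,False,False,False,False,False,False,False,False],
  [False,True,False,False,False,False,False,False,False,False],
  [False,False,True,False,False,False,False,False,False,False],
  [False,False,False,True,False,False,False,False,False,False],
  [False,False,False,False,True,False,False,False,False,False],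
  [False,False,False,False,False,True,False,False,False,False],
  [False,False,False,False,False,False,True,False,False,False],
  [False,False,False,False,False,False,False,True,False,False],
  [False,False,False,False,False,False,False,False,True,False],
  [False,True,True,True,False,False,True,True,False,False],
  [False,False,False,False,False,False,False,False,False,True],
  [False,False,False,True,True,True,False,True,False,True],
  [True,True,True,True,True,False,False,True,False,True],
  [False,True,True,False,False,False,False,True,True,True],
  [True,False,True,True,False,True,False,False,False,True],
  [False,True,True,True,True,True,True,False,True,False],
  [True,False,True,False,False,True,True,False,True,False],
  [True,True,True,True,False,False,True,True,False,True],
  [True,False,True,True,False,True,True,True,True,False],
  [False,False,True,False,True,False,False,False,True,False],
  [False,True,False,True,True,True,True,False,True,True],
  [False,True,True,True,True,False,False,False,True,False],
  [True,False,False,True,True,True,False,False,False,True],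
  [True,False,True,True,False,False,True,True,False,False],
  [True,False,False,False,False,True,True,False,True,True]]"

definition cols10 :: "bool list list" where
"cols10 = [
  [True,False,False,False,False,False,False,False,False,False,False],
  [False,True,False,False,False,False,False,False,False,False,False],
  [False,False,True,False,False,False,False,False,False,False,False],
  [False,False,False,True,False,False,False,False,False,False,False],
  [False,False,False,False,True,False,False,False,False,False,False],
  [False,False,False,False,False,True,False,False,False,False,False],
  [False,False,False,False,False,False,True,False,False,False,False],
  [False,False,False,False,False,False,False,True,False,False,False],
  [False,False,False,False,False,False,False,False,True,False,False],
  [False,True,True,True,False,False,True,True,False,False,False],
  [False,False,False,False,False,False,False,False,False,True,False],
  [False,False,False,True,True,True,False,True,False,True,False],
  [True,True,True,True,True,False,False,True,False,True,False],
  [False,True,True,False,False,False,False,True,True,True,False],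
  [True,False,True,True,False,True,False,False,False,True,False],
  [False,True,True,True,True,True,True,False,True,False,False],
  [True,False,True,False,False,True,True,False,True,False,False],
  [True,True,True,True,False,False,True,True,False,True,False],
  [True,False,True,True,False,True,True,True,True,False,False],
  [False,False,True,False,True,False,False,False,True,False,False],
  [False,True,False,True,True,True,True,False,True,True,False],
  [False,True,True,True,True,False,False,False,True,False,False],
  [True,False,False,True,True,True,False,False,False,True,False],
  [True,False,True,True,False,False,True,True,False,False,False],
  [False,False,False,False,False,False,False,False,False,False,True]]"

definition cols11 :: "bool list list" where
"cols11 = [
  [True,False,False,False,False,False,False,False,False,False,False,False],
  [False,True,False,False,False,False,False,False,False,False,False,False],
  [False,False,True,False,False,False,False,False,False,False,False,False],
  [False,False,False,True,False,False,False,False,False,False,False,False],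
  [False,False,False,False,True,False,False,False,False,False,False,False],
  [False,False,False,False,False,True,False,False,False,False,False,False],
  [False,False,False,False,False,False,True,False,False,False,False,False],
  [False,False,False,False,False,False,False,True,False,False,False,False],
  [False,False,False,False,False,False,False,False,True,False,False,False],
  [False,False,False,False,False,False,False,False,False,True,False,False],
  [False,False,False,False,False,False,False,False,False,False,True,False],
  [False,True,True,False,True,True,True,False,False,True,True,False],
  [True,True,True,True,True,False,False,True,False,False,True,False],
  [False,False,False,True,False,False,True,False,True,True,True,False],
  [True,True,False,False,False,True,True,True,False,True,True,False],
  [False,False,False,False,True,True,False,True,True,True,False,False],
  [True,False,True,False,False,True,True,False,True,False,False,False],
  [True,True,True,True,False,False,True,True,False,False,True,False],
  [True,False,True,True,False,True,True,True,True,False,False,False],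
  [False,True,False,True,True,False,True,True,True,True,False,False],
  [False,False,True,False,True,True,False,True,True,True,True,False],
  [False,True,True,True,True,False,False,False,True,False,False,False],
  [True,False,False,True,True,True,False,False,False,False,True,False],
  [True,True,False,False,False,False,False,False,False,True,False,False],
  [False,False,False,False,False,False,False,False,False,False,False,True]]"

definition cols12 :: "bool list list" where
"cols12 = [
  [True,False,False,False,False,False,False,False,False,False,False,False,False],
  [False,True,False,False,False,False,False,False,False,False,False,False,False],
  [False,False,True,False,False,False,False,False,False,False,False,False,False],
  [False,False,False,True,False,False,False,False,False,False,False,False,False],
  [False,False,False,False,True,False,False,False,False,False,False,False,False],
  [False,False,False,False,False,True,False,False,False,False,False,False,False],
  [False,False,False,False,False,False,True,False,False,False,False,False,False],
  [False,False,False,False,False,False,False,True,False,False,False,False,False],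
  [False,False,False,False,False,False,False,False,True,False,False,False,False],
  [False,False,False,False,False,False,False,False,False,True,False,False,False],
  [False,False,False,False,False,False,False,False,False,False,True,False,False],
  [False,False,False,False,False,False,False,False,False,False,False,True,False],
  [True,True,True,True,True,False,False,True,False,False,True,False,False],
  [False,True,True,True,True,True,False,False,True,False,False,True,False],
  [True,True,False,False,False,True,True,True,False,True,True,False,False],
  [False,True,True,False,False,False,True,True,True,False,True,True,False],
  [True,True,False,False,True,False,False,False,True,True,True,True,False],
  [True,False,False,True,True,True,False,True,False,True,False,True,False],
  [True,False,True,True,False,True,True,True,True,False,False,False,False],
  [False,True,False,True,True,False,True,True,True,True,False,False,False],
  [False,False,True,False,True,True,False,True,True,True,True,False,False],
  [False,False,False,True,False,True,True,False,True,True,True,True,False],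
  [True,True,True,True,False,False,True,False,False,True,False,True,False],
  [True,False,True,False,True,True,True,False,False,False,True,True,False],
  [False,False,False,False,False,False,False,False,False,False,False,False,True]]"

definition T0 :: "bool list" where
"T0 = [False,False,False,False,False,False,False,False,False,False,False,False,False,False,False,False,False,False,False,False,False,False,False,False]"

definition T1 :: "bool list" where
"T1 = [False,True,True,False,False,True,True,True,False,True,True,True,True,False,True,True,True,True,True,True,True,False,True]"

definition T2 :: "bool list" where
"T2 = [True,False,False,True,True,True,True,True,False,False,True,False,True,True,True,True,True,True,True,True,False,True]"

definition T3 :: "bool list" where
"T3 = [True,False,False,False,True,False,True,False,True,False,True,True,False,False,False,False,True,False,False,False,True]"

definition T4 :: "bool list" where
"T4 = [True,True,False,True,False,False,True,False,False,True,True,False,False,False,False,False,True,False,False,False]"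

definition T5 :: "bool list" where
"T5 = [True,True,False,True,False,False,True,True,True,True,True,False,True,False,False,True,False,False,True]"

definition T6 :: "bool list" where
"T6 = [True,False,True,False,False,False,True,True,False,True,True,True,True,True,False,True,False,True]"

definition T7 :: "bool list" where
"T7 = [True,False,False,False,False,False,False,True,False,True,False,True,False,False,False,True,True]"

definition T8 :: "bool list" where
"T8 = [False,True,True,True,False,False,False,True,True,False,False,False,False,True,False,True]"

definition T9 :: "bool list" where
"T9 = [True,True,True,False,False,True,True,True,True,True,False,False,True,False,True]"

definition T10 :: "bool list" where
"T10 = [True,True,False,False,True,False,False,True,False,False,True,True,False,True]"

definition T11 :: "bool list" where
"T11 = [False,False,True,True,False,False,True,False,True,True,False,True,True]"

definition T12 :: "bool list" where
"T12 = [True,True,False,True,False,True,False,False,False,True,True,False]"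

definition T13 :: "bool list" where
"T13 = [False,False,False,True,True,True,True,False,True,False,False]"

definition T14 :: "bool list" where
"T14 = [False,False,True,True,True,True,False,True,False,False]"

definition T15 :: "bool list" where
"T15 = [True,True,True,True,True,True,True,True,True]"

definition T16 :: "bool list" where
"T16 = [True,False,True,False,False,False,False,False]"

definition T17 :: "bool list" where
"T17 = [False,False,True,True,False,False,False]"

definition T18 :: "bool list" where
"T18 = [False,True,True,True,False,False]"

definition T19 :: "bool list" where
"T19 = [False,False,False,True,False]"

definition T20 :: "bool list" where
"T20 = [False,False,False,False]"

definition T21 :: "bool list" where
"T21 = [False,False,False]"

definition T22 :: "bool list" where
"T22 = [False,False]"

definition T23 :: "bool list" where
"T23 = [False]"

definition T24 :: "bool list" where
"T24 = []"

lemma length_xorv[simp]: "length (xorv a b) = min (length a) (length b)"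
  by (induction a b rule: xorv.induct) auto

lemma nth_xorv[simp]: "j < length a \<Longrightarrow> j < length b \<Longrightarrow> xorv a b ! j = (a!j \<noteq> b!j)"
  by (induction a b arbitrary: j rule: xorv.induct) (auto simp: nth_Cons split: nat.split)

lemma xorv_assoc: "length a = length b \<Longrightarrow> length b = length c \<Longrightarrow>
   xorv a (xorv b c) = xorv (xorv a b) c"
  by (rule nth_equalityI) auto

lemma xorv_comm: "xorv a b = xorv b a"
  by (rule nth_equalityI) auto

lemma xorv_zero[simp]: "length a = n \<Longrightarrow> xorv a (replicate n False) = a"
  by (rule nth_equalityI) auto

lemma xorv_zero_left[simp]: "length a = n \<Longrightarrow> xorv (replicate n False) a = a"
  by (rule nth_equalityI) auto

lemma xorv_self[simp]: "xorv a a = replicate (length a) False"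
  by (rule nth_equalityI) auto

lemma xorv_append: "length a = length c \<Longrightarrow> xorv (a@b) (c@d) = xorv a c @ xorv b d"
  by (induction a c rule: xorv.induct) auto

lemma length_sumrows[simp]: "(\<forall>r\<in>set rs. length r = n) \<Longrightarrow> length (sumrows n t rs) = n"
  by (induction n t rs rule: sumrows.induct) auto

lemma wt_Cons[simp]: "wt (b#c) = (if b then Suc (wt c) else wt c)"
  by (simp add: wt_def)

lemma sumrows_xorv:
  "length a = length rs \<Longrightarrow> length b = length rs \<Longrightarrow> (\<forall>r\<in>set rs. length r = n) \<Longrightarrow>
   sumrows n (xorv a b) rs = xorv (sumrows n a rs) (sumrows n b rs)"
proof (induction rs arbitrary: a b)
  case Nil
  then show ?case by simp
next
  case (Cons r rs)
  then obtain x a' y b' where ab: "a = x#a'" "b = y#b'"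
    by (metis length_Suc_conv)
  from Cons have l: "length a' = length rs" "length b' = length rs" "length r = n"
    "\<forall>r\<in>set rs. length r = n" by (auto simp: ab)
  have IH: "sumrows n (xorv a' b') rs = xorv (sumrows n a' rs) (sumrows n b' rs)"
    using Cons.IH l by blast
  show ?case
    by (simp add: ab IH, intro conjI impI; rule nth_equalityI) (use l in auto)
qed

lemma sumrows_zero[simp]: "sumrows m (replicate k False) cols = replicate m False"
  by (induction k arbitrary: cols) (auto, case_tac cols, auto)

lemma sumrows_zeros: "(\<forall>x\<in>set xs. x = replicate m False) \<Longrightarrow> sumrows m t xs = replicate m False"
  by (induction m t xs rule: sumrows.induct) auto

lemma sumrows_sumrows:
  "length t = length rs \<Longrightarrow> (\<forall>r\<in>set rs. length r = length cols) \<Longrightarrow> (\<forall>c\<in>set cols. length c = m) \<Longrightarrow>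
   sumrows m (sumrows (length cols) t rs) cols = sumrows m t (map (\<lambda>r. sumrows m r cols) rs)"
proof (induction rs arbitrary: t)
  case Nil
  then show ?case by simp
next
  case (Cons r rs)
  then obtain b t' where t: "t = b#t'" by (metis length_Suc_conv)
  with Cons show ?case
    by (auto simp: sumrows_xorv)
qed

lemma sumrows_prefix: "i < length rs \<Longrightarrow>
  sumrows n (replicate i False @ True # t) rs = xorv (rs!i) (sumrows n t (drop (Suc i) rs))"
proof (induction i arbitrary: rs)
  case 0
  then show ?case by (cases rs) auto
next
  case (Suc i)
  then show ?case by (cases rs) auto
qed

lemma sumrows_nth: "length t = length rs \<Longrightarrow> (\<forall>r\<in>set rs. length r = n) \<Longrightarrow> j < n \<Longrightarrow>
   sumrows n t rs ! j = odd (length (filter (\<lambda>(b,r). b \<and> r!j) (zip t rs)))"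
proof (induction rs arbitrary: t)
  case Nil
  then show ?case by simp
next
  case (Cons r rs)
  then obtain b t' where t: "t = b#t'" by (metis length_Suc_conv)
  with Cons show ?case by auto
qed

lemma vec_mat_nth: "j < l \<Longrightarrow> vec_mat l u G ! j = odd (card {i. i < l \<and> u ! i \<and> G i j})"
  by (simp add: vec_mat_def)

lemma length_vec_mat[simp]: "length (vec_mat l u G) = l"
  by (simp add: vec_mat_def)

lemma vec_mat_sumrows:
  assumes "length z = l" "length R = l" "\<forall>r\<in>set R. length r = l"
  shows "vec_mat l z (Am R) = sumrows l z R"
proof (rule nth_equalityI)
  show "length (vec_mat l z (Am R)) = length (sumrows l z R)" using assms by simp
next
  fix j assume "j < length (vec_mat l z (Am R))"
  then have j: "j < l" by simp
  have "sumrows l z R ! j = odd (length (filter (\<lambda>(b,r). b \<and> r!j) (zip z R)))"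
    using sumrows_nth[of z R l j] assms j by simp
  also have "length (filter (\<lambda>(b,r). b \<and> r!j) (zip z R)) = card {i. i < l \<and> z ! i \<and> R ! i ! j}"
    by (subst length_filter_conv_card) (use assms in \<open>auto intro!: arg_cong[where f=card]\<close>)
  finally show "vec_mat l z (Am R) ! j = sumrows l z R ! j"
    using j by (simp add: vec_mat_nth Am_def)
qed

lemma hamming_wt: "length a = length b \<Longrightarrow> hamming a b = wt (xorv a b)"
  unfolding hamming_def wt_def
  by (subst length_filter_conv_card) (auto intro!: arg_cong[where f=card])

lemma hamming_le: "hamming a b \<le> length a"
proof -
  have "{k. k < length a \<and> a ! k \<noteq> b ! k} \<subseteq> {..<length a}" by auto
  then show ?thesis unfolding hamming_def by (metis card_lessThan card_mono finite_lessThan)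
qed

lemma mw_le: "length t = length rs \<Longrightarrow> (\<forall>r\<in>set rs. length r = n) \<Longrightarrow> length v = n \<Longrightarrow>
  mw v rs \<le> wt (xorv v (sumrows n t rs))"
proof (induction rs arbitrary: t v)
  case Nil
  then show ?case by simp
next
  case (Cons r rs)
  then obtain b t' where t: "t = b#t'" by (metis length_Suc_conv)
  show ?case
  proof (cases b)
    case True
    have A: "mw (xorv v r) rs \<le> wt (xorv (xorv v r) (sumrows n t' rs))"
      using Cons t by simp
    have B: "min (mw v rs) (mw (xorv v r) rs) \<le> wt (xorv (xorv v r) (sumrows n t' rs))"
      using A min.cobounded2 le_trans by blast
    show ?thesis using Cons.prems t True B by (simp add: xorv_assoc)
  next
    case False
    then show ?thesis using Cons t by (simp add: le_trans[OF min.cobounded1])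
  qed
qed

lemma chk_ok: "chk cols acc k tg \<Longrightarrow> length c = length cols \<Longrightarrow> wt c \<le> k \<Longrightarrow> length acc = m \<Longrightarrow>
   (\<forall>x\<in>set cols. length x = m) \<Longrightarrow> xorv acc (sumrows m c cols) \<noteq> tg"
proof (induction cols arbitrary: c acc k)
  case Nil
  then show ?case by simp
next
  case (Cons col cols)
  then obtain b c' where c: "c = b#c'" by (metis length_Suc_conv)
  show ?case
  proof (cases b)
    case True
    then have "k \<noteq> 0" using Cons c by simp
    then have "chk cols (xorv acc col) (k - 1) tg" using Cons by simp
    then have "xorv (xorv acc col) (sumrows m c' cols) \<noteq> tg"
      using Cons.IH[of "xorv acc col" "k - 1" c'] Cons.prems c True by simp
    then show ?thesis using Cons.prems c True by (simp add: xorv_assoc)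
  next
    case False
    then show ?thesis using Cons.IH[of acc k c'] Cons.prems c by simp
  qed
qed

lemma lowM2:
  assumes "chk cols (replicate m False) k (sumrows m r cols)"
    "\<forall>x\<in>set rs. sumrows m x cols = replicate m False"
    "length r = n" "length cols = n" "\<forall>x\<in>set cols. length x = m"
    "\<forall>x\<in>set rs. length x = n" "length t = length rs"
  shows "k < wt (xorv r (sumrows n t rs))"
proof (rule ccontr)
  define c where "c = xorv r (sumrows n t rs)"
  assume "\<not> k < wt (xorv r (sumrows n t rs))"
  then have w: "wt c \<le> k" by (simp add: c_def)
  have lc: "length c = length cols" using assms by (simp add: c_def)
  have "sumrows m (sumrows n t rs) cols = sumrows m t (map (\<lambda>x. sumrows m x cols) rs)"
    using sumrows_sumrows[of t rs cols m] assms by simp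
  also have "\<dots> = replicate m False" using assms(2) by (intro sumrows_zeros) auto
  finally have z: "sumrows m (sumrows n t rs) cols = replicate m False" .
  have "sumrows m c cols = xorv (sumrows m r cols) (sumrows m (sumrows n t rs) cols)"
    unfolding c_def using assms by (intro sumrows_xorv) auto
  also have "\<dots> = sumrows m r cols" using z assms by simp
  finally have "xorv (replicate m False) (sumrows m c cols) = sumrows m r cols"
    using assms by simp
  with chk_ok[OF assms(1) lc w] assms show False by simp
qed

lemma Rl_len: "length Rl = 25" by (simp add: Rl_def)
lemma Rl_rows: "\<forall>r\<in>set Rl. length r = 25" by (simp add: Rl_def)
lemma Sl_len: "length Sl = 25" by (simp add: Sl_def)
lemma Sl_rows: "\<forall>r\<in>set Sl. length r = 25" by (simp add: Sl_def)

lemma drop_rows: "\<forall>r\<in>set (drop k Rl). length r = 25"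
  using Rl_rows by (meson in_set_dropD)

lemma lk_sumrows: "length z = 25 \<Longrightarrow> lin_kernel 25 (Am Rl) z = sumrows 25 z Rl"
  unfolding lin_kernel_def using Rl_len Rl_rows by (intro vec_mat_sumrows) auto

lemma pd_hamming:
  assumes i: "i < 25" and l: "length w = i" "length u = 25 - i - 1" "length v = 25 - i - 1"
  shows "hamming (lin_kernel 25 (Am Rl) (w @ [False] @ u)) (lin_kernel 25 (Am Rl) (w @ [True] @ v))
      = wt (xorv (Rl!i) (sumrows 25 (xorv u v) (drop (Suc i) Rl)))"
proof -
  have lx: "length (w @ [False] @ u) = 25" "length (w @ [True] @ v) = 25" using l i by auto
  have "hamming (lin_kernel 25 (Am Rl) (w @ [False] @ u)) (lin_kernel 25 (Am Rl) (w @ [True] @ v))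
      = wt (xorv (sumrows 25 (w @ [False] @ u) Rl) (sumrows 25 (w @ [True] @ v) Rl))"
    using lx Rl_rows by (simp add: lk_sumrows hamming_wt)
  also have "xorv (sumrows 25 (w @ [False] @ u) Rl) (sumrows 25 (w @ [True] @ v) Rl)
      = sumrows 25 (xorv (w @ [False] @ u) (w @ [True] @ v)) Rl"
    using lx Rl_rows Rl_len by (intro sumrows_xorv[symmetric]) auto
  also have "xorv (w @ [False] @ u) (w @ [True] @ v) = replicate i False @ True # xorv u v"
    using l by (simp add: xorv_append)
  also have "sumrows 25 (replicate i False @ True # xorv u v) Rl
     = xorv (Rl!i) (sumrows 25 (xorv u v) (drop (Suc i) Rl))"
    using i Rl_len by (intro sumrows_prefix) auto
  finally show ?thesis .
qed

lemma pd_eq: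
  assumes i: "i < 25"
    and lb: "\<And>t. length t = 24 - i \<Longrightarrow> d \<le> wt (xorv (Rl!i) (sumrows 25 t (drop (Suc i) Rl)))"
    and T: "length T = 24 - i" "wt (xorv (Rl!i) (sumrows 25 T (drop (Suc i) Rl))) = d"
  shows "partial_dist 25 (lin_kernel 25 (Am Rl)) i = d"
proof -
  let ?g = "lin_kernel 25 (Am Rl)"
  let ?S = "{hamming (?g (w @ [False] @ u)) (?g (w @ [True] @ v)) | w u v.
      length w = i \<and> length u = 25 - i - 1 \<and> length v = 25 - i - 1}"
  have fin: "finite ?S"
  proof (rule finite_subset)
    show "?S \<subseteq> {..25}"
      by (auto simp: lin_kernel_def) (metis hamming_le length_vec_mat)
  qed simp
  have low: "d \<le> y" if "y \<in> ?S" for y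
  proof -
    from that obtain w u v where y: "y = hamming (?g (w @ [False] @ u)) (?g (w @ [True] @ v))"
      and l: "length w = i" "length u = 25 - i - 1" "length v = 25 - i - 1" by blast
    have "y = wt (xorv (Rl!i) (sumrows 25 (xorv u v) (drop (Suc i) Rl)))"
      using pd_hamming[OF i l] y by simp
    moreover have "length (xorv u v) = 24 - i" using l by simp
    ultimately show ?thesis using lb by simp
  qed
  have mem: "d \<in> ?S"
  proof -
    have "length (replicate i False) = i" "length (replicate (24 - i) False) = 25 - i - 1"
      "length T = 25 - i - 1" using T by auto
    moreover have "hamming (?g (replicate i False @ [False] @ replicate (24 - i) False))
        (?g (replicate i False @ [True] @ T)) = d"
      using pd_hamming[OF i, of "replicate i False" "replicate (24 - i) False" T] T i by simp
    ultimately show ?thesis by blast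
  qed
  show ?thesis unfolding partial_dist_def
    by (rule Min_eqI[OF fin low mem])
qed


lemma Rl_nth_len: "i < 25 \<Longrightarrow> length (Rl!i) = 25"
  using Rl_rows Rl_len by (metis nth_mem)

lemma pd0: "partial_dist 25 (lin_kernel 25 (Am Rl)) 0 = 1"
proof (rule pd_eq)
  fix t :: "bool list" assume lt: "length t = 24 - 0"
  have c1: "chk cols0 (replicate 1 False) 0 (sumrows 1 (Rl!0) cols0)" by code_simp
  have c2: "\<forall>x\<in>set (drop (Suc 0) Rl). sumrows 1 x cols0 = replicate 1 False" by code_simp
  have c3: "length cols0 = 25" "\<forall>x\<in>set cols0. length x = 1" by (simp_all add: cols0_def)
  have "0 < wt (xorv (Rl!0) (sumrows 25 t (drop (Suc 0) Rl)))"
    using lowM2[where t=t and n=25, OF c1 c2 _ c3(1) c3(2) drop_rows] lt Rl_len Rl_nth_len[of 0] by simp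
  then show "1 \<le> wt (xorv (Rl!0) (sumrows 25 t (drop (Suc 0) Rl)))" by simp
next
  show "length T0 = 24 - 0" by (simp add: T0_def)
next
  show "wt (xorv (Rl!0) (sumrows 25 T0 (drop (Suc 0) Rl))) = 1" by code_simp
qed simp

lemma pd1: "partial_dist 25 (lin_kernel 25 (Am Rl)) 1 = 2"
proof (rule pd_eq)
  fix t :: "bool list" assume lt: "length t = 24 - 1"
  have c1: "chk cols1 (replicate 2 False) 1 (sumrows 2 (Rl!1) cols1)" by code_simp
  have c2: "\<forall>x\<in>set (drop (Suc 1) Rl). sumrows 2 x cols1 = replicate 2 False" by code_simp
  have c3: "length cols1 = 25" "\<forall>x\<in>set cols1. length x = 2" by (simp_all add: cols1_def)
  have "1 < wt (xorv (Rl!1) (sumrows 25 t (drop (Suc 1) Rl)))"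
    using lowM2[where t=t and n=25, OF c1 c2 _ c3(1) c3(2) drop_rows] lt Rl_len Rl_nth_len[of 1] by simp
  then show "2 \<le> wt (xorv (Rl!1) (sumrows 25 t (drop (Suc 1) Rl)))" by simp
next
  show "length T1 = 24 - 1" by (simp add: T1_def)
next
  show "wt (xorv (Rl!1) (sumrows 25 T1 (drop (Suc 1) Rl))) = 2" by code_simp
qed simp

lemma pd2: "partial_dist 25 (lin_kernel 25 (Am Rl)) 2 = 2"
proof (rule pd_eq)
  fix t :: "bool list" assume lt: "length t = 24 - 2"
  have c1: "chk cols2 (replicate 3 False) 1 (sumrows 3 (Rl!2) cols2)" by code_simp
  have c2: "\<forall>x\<in>set (drop (Suc 2) Rl). sumrows 3 x cols2 = replicate 3 False" by code_simp
  have c3: "length cols2 = 25" "\<forall>x\<in>set cols2. length x = 3" by (simp_all add: cols2_def)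
  have "1 < wt (xorv (Rl!2) (sumrows 25 t (drop (Suc 2) Rl)))"
    using lowM2[where t=t and n=25, OF c1 c2 _ c3(1) c3(2) drop_rows] lt Rl_len Rl_nth_len[of 2] by simp
  then show "2 \<le> wt (xorv (Rl!2) (sumrows 25 t (drop (Suc 2) Rl)))" by simp
next
  show "length T2 = 24 - 2" by (simp add: T2_def)
next
  show "wt (xorv (Rl!2) (sumrows 25 T2 (drop (Suc 2) Rl))) = 2" by code_simp
qed simp

lemma pd3: "partial_dist 25 (lin_kernel 25 (Am Rl)) 3 = 2"
proof (rule pd_eq)
  fix t :: "bool list" assume lt: "length t = 24 - 3"
  have c1: "chk cols3 (replicate 4 False) 1 (sumrows 4 (Rl!3) cols3)" by code_simp
  have c2: "\<forall>x\<in>set (drop (Suc 3) Rl). sumrows 4 x cols3 = replicate 4 False" by code_simp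
  have c3: "length cols3 = 25" "\<forall>x\<in>set cols3. length x = 4" by (simp_all add: cols3_def)
  have "1 < wt (xorv (Rl!3) (sumrows 25 t (drop (Suc 3) Rl)))"
    using lowM2[where t=t and n=25, OF c1 c2 _ c3(1) c3(2) drop_rows] lt Rl_len Rl_nth_len[of 3] by simp
  then show "2 \<le> wt (xorv (Rl!3) (sumrows 25 t (drop (Suc 3) Rl)))" by simp
next
  show "length T3 = 24 - 3" by (simp add: T3_def)
next
  show "wt (xorv (Rl!3) (sumrows 25 T3 (drop (Suc 3) Rl))) = 2" by code_simp
qed simp

lemma pd4: "partial_dist 25 (lin_kernel 25 (Am Rl)) 4 = 2"
proof (rule pd_eq)
  fix t :: "bool list" assume lt: "length t = 24 - 4"
  have c1: "chk cols4 (replicate 5 False) 1 (sumrows 5 (Rl!4) cols4)" by code_simp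
  have c2: "\<forall>x\<in>set (drop (Suc 4) Rl). sumrows 5 x cols4 = replicate 5 False" by code_simp
  have c3: "length cols4 = 25" "\<forall>x\<in>set cols4. length x = 5" by (simp_all add: cols4_def)
  have "1 < wt (xorv (Rl!4) (sumrows 25 t (drop (Suc 4) Rl)))"
    using lowM2[where t=t and n=25, OF c1 c2 _ c3(1) c3(2) drop_rows] lt Rl_len Rl_nth_len[of 4] by simp
  then show "2 \<le> wt (xorv (Rl!4) (sumrows 25 t (drop (Suc 4) Rl)))" by simp
next
  show "length T4 = 24 - 4" by (simp add: T4_def)
next
  show "wt (xorv (Rl!4) (sumrows 25 T4 (drop (Suc 4) Rl))) = 2" by code_simp
qed simp

lemma pd5: "partial_dist 25 (lin_kernel 25 (Am Rl)) 5 = 2"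
proof (rule pd_eq)
  fix t :: "bool list" assume lt: "length t = 24 - 5"
  have c1: "chk cols5 (replicate 6 False) 1 (sumrows 6 (Rl!5) cols5)" by code_simp
  have c2: "\<forall>x\<in>set (drop (Suc 5) Rl). sumrows 6 x cols5 = replicate 6 False" by code_simp
  have c3: "length cols5 = 25" "\<forall>x\<in>set cols5. length x = 6" by (simp_all add: cols5_def)
  have "1 < wt (xorv (Rl!5) (sumrows 25 t (drop (Suc 5) Rl)))"
    using lowM2[where t=t and n=25, OF c1 c2 _ c3(1) c3(2) drop_rows] lt Rl_len Rl_nth_len[of 5] by simp
  then show "2 \<le> wt (xorv (Rl!5) (sumrows 25 t (drop (Suc 5) Rl)))" by simp
next
  show "length T5 = 24 - 5" by (simp add: T5_def)
next
  show "wt (xorv (Rl!5) (sumrows 25 T5 (drop (Suc 5) Rl))) = 2" by code_simp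
qed simp

lemma pd6: "partial_dist 25 (lin_kernel 25 (Am Rl)) 6 = 4"
proof (rule pd_eq)
  fix t :: "bool list" assume lt: "length t = 24 - 6"
  have c1: "chk cols6 (replicate 7 False) 3 (sumrows 7 (Rl!6) cols6)" by code_simp
  have c2: "\<forall>x\<in>set (drop (Suc 6) Rl). sumrows 7 x cols6 = replicate 7 False" by code_simp
  have c3: "length cols6 = 25" "\<forall>x\<in>set cols6. length x = 7" by (simp_all add: cols6_def)
  have "3 < wt (xorv (Rl!6) (sumrows 25 t (drop (Suc 6) Rl)))"
    using lowM2[where t=t and n=25, OF c1 c2 _ c3(1) c3(2) drop_rows] lt Rl_len Rl_nth_len[of 6] by simp
  then show "4 \<le> wt (xorv (Rl!6) (sumrows 25 t (drop (Suc 6) Rl)))" by simp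
next
  show "length T6 = 24 - 6" by (simp add: T6_def)
next
  show "wt (xorv (Rl!6) (sumrows 25 T6 (drop (Suc 6) Rl))) = 4" by code_simp
qed simp

lemma pd7: "partial_dist 25 (lin_kernel 25 (Am Rl)) 7 = 4"
proof (rule pd_eq)
  fix t :: "bool list" assume lt: "length t = 24 - 7"
  have c1: "chk cols7 (replicate 8 False) 3 (sumrows 8 (Rl!7) cols7)" by code_simp
  have c2: "\<forall>x\<in>set (drop (Suc 7) Rl). sumrows 8 x cols7 = replicate 8 False" by code_simp
  have c3: "length cols7 = 25" "\<forall>x\<in>set cols7. length x = 8" by (simp_all add: cols7_def)
  have "3 < wt (xorv (Rl!7) (sumrows 25 t (drop (Suc 7) Rl)))"
    using lowM2[where t=t and n=25, OF c1 c2 _ c3(1) c3(2) drop_rows] lt Rl_len Rl_nth_len[of 7] by simp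
  then show "4 \<le> wt (xorv (Rl!7) (sumrows 25 t (drop (Suc 7) Rl)))" by simp
next
  show "length T7 = 24 - 7" by (simp add: T7_def)
next
  show "wt (xorv (Rl!7) (sumrows 25 T7 (drop (Suc 7) Rl))) = 4" by code_simp
qed simp

lemma pd8: "partial_dist 25 (lin_kernel 25 (Am Rl)) 8 = 4"
proof (rule pd_eq)
  fix t :: "bool list" assume lt: "length t = 24 - 8"
  have c1: "chk cols8 (replicate 9 False) 3 (sumrows 9 (Rl!8) cols8)" by code_simp
  have c2: "\<forall>x\<in>set (drop (Suc 8) Rl). sumrows 9 x cols8 = replicate 9 False" by code_simp
  have c3: "length cols8 = 25" "\<forall>x\<in>set cols8. length x = 9" by (simp_all add: cols8_def)
  have "3 < wt (xorv (Rl!8) (sumrows 25 t (drop (Suc 8) Rl)))"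
    using lowM2[where t=t and n=25, OF c1 c2 _ c3(1) c3(2) drop_rows] lt Rl_len Rl_nth_len[of 8] by simp
  then show "4 \<le> wt (xorv (Rl!8) (sumrows 25 t (drop (Suc 8) Rl)))" by simp
next
  show "length T8 = 24 - 8" by (simp add: T8_def)
next
  show "wt (xorv (Rl!8) (sumrows 25 T8 (drop (Suc 8) Rl))) = 4" by code_simp
qed simp

lemma pd9: "partial_dist 25 (lin_kernel 25 (Am Rl)) 9 = 4"
proof (rule pd_eq)
  fix t :: "bool list" assume lt: "length t = 24 - 9"
  have c1: "chk cols9 (replicate 10 False) 3 (sumrows 10 (Rl!9) cols9)" by code_simp
  have c2: "\<forall>x\<in>set (drop (Suc 9) Rl). sumrows 10 x cols9 = replicate 10 False" by code_simp
  have c3: "length cols9 = 25" "\<forall>x\<in>set cols9. length x = 10" by (simp_all add: cols9_def)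
  have "3 < wt (xorv (Rl!9) (sumrows 25 t (drop (Suc 9) Rl)))"
    using lowM2[where t=t and n=25, OF c1 c2 _ c3(1) c3(2) drop_rows] lt Rl_len Rl_nth_len[of 9] by simp
  then show "4 \<le> wt (xorv (Rl!9) (sumrows 25 t (drop (Suc 9) Rl)))" by simp
next
  show "length T9 = 24 - 9" by (simp add: T9_def)
next
  show "wt (xorv (Rl!9) (sumrows 25 T9 (drop (Suc 9) Rl))) = 4" by code_simp
qed simp

lemma pd10: "partial_dist 25 (lin_kernel 25 (Am Rl)) 10 = 4"
proof (rule pd_eq)
  fix t :: "bool list" assume lt: "length t = 24 - 10"
  have c1: "chk cols10 (replicate 11 False) 3 (sumrows 11 (Rl!10) cols10)" by code_simp
  have c2: "\<forall>x\<in>set (drop (Suc 10) Rl). sumrows 11 x cols10 = replicate 11 False" by code_simp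
  have c3: "length cols10 = 25" "\<forall>x\<in>set cols10. length x = 11" by (simp_all add: cols10_def)
  have "3 < wt (xorv (Rl!10) (sumrows 25 t (drop (Suc 10) Rl)))"
    using lowM2[where t=t and n=25, OF c1 c2 _ c3(1) c3(2) drop_rows] lt Rl_len Rl_nth_len[of 10] by simp
  then show "4 \<le> wt (xorv (Rl!10) (sumrows 25 t (drop (Suc 10) Rl)))" by simp
next
  show "length T10 = 24 - 10" by (simp add: T10_def)
next
  show "wt (xorv (Rl!10) (sumrows 25 T10 (drop (Suc 10) Rl))) = 4" by code_simp
qed simp

lemma pd11: "partial_dist 25 (lin_kernel 25 (Am Rl)) 11 = 4"
proof (rule pd_eq)
  fix t :: "bool list" assume lt: "length t = 24 - 11"
  have c1: "chk cols11 (replicate 12 False) 3 (sumrows 12 (Rl!11) cols11)" by code_simp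
  have c2: "\<forall>x\<in>set (drop (Suc 11) Rl). sumrows 12 x cols11 = replicate 12 False" by code_simp
  have c3: "length cols11 = 25" "\<forall>x\<in>set cols11. length x = 12" by (simp_all add: cols11_def)
  have "3 < wt (xorv (Rl!11) (sumrows 25 t (drop (Suc 11) Rl)))"
    using lowM2[where t=t and n=25, OF c1 c2 _ c3(1) c3(2) drop_rows] lt Rl_len Rl_nth_len[of 11] by simp
  then show "4 \<le> wt (xorv (Rl!11) (sumrows 25 t (drop (Suc 11) Rl)))" by simp
next
  show "length T11 = 24 - 11" by (simp add: T11_def)
next
  show "wt (xorv (Rl!11) (sumrows 25 T11 (drop (Suc 11) Rl))) = 4" by code_simp
qed simp

lemma pd12: "partial_dist 25 (lin_kernel 25 (Am Rl)) 12 = 4"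
proof (rule pd_eq)
  fix t :: "bool list" assume lt: "length t = 24 - 12"
  have c1: "chk cols12 (replicate 13 False) 3 (sumrows 13 (Rl!12) cols12)" by code_simp
  have c2: "\<forall>x\<in>set (drop (Suc 12) Rl). sumrows 13 x cols12 = replicate 13 False" by code_simp
  have c3: "length cols12 = 25" "\<forall>x\<in>set cols12. length x = 13" by (simp_all add: cols12_def)
  have "3 < wt (xorv (Rl!12) (sumrows 25 t (drop (Suc 12) Rl)))"
    using lowM2[where t=t and n=25, OF c1 c2 _ c3(1) c3(2) drop_rows] lt Rl_len Rl_nth_len[of 12] by simp
  then show "4 \<le> wt (xorv (Rl!12) (sumrows 25 t (drop (Suc 12) Rl)))" by simp
next
  show "length T12 = 24 - 12" by (simp add: T12_def)
next
  show "wt (xorv (Rl!12) (sumrows 25 T12 (drop (Suc 12) Rl))) = 4" by code_simp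
qed simp

lemma pd13: "partial_dist 25 (lin_kernel 25 (Am Rl)) 13 = 8"
proof (rule pd_eq)
  fix t :: "bool list" assume lt: "length t = 24 - 13"
  have "mw (Rl!13) (drop (Suc 13) Rl) = 8" by code_simp
  then show "8 \<le> wt (xorv (Rl!13) (sumrows 25 t (drop (Suc 13) Rl)))"
    using mw_le[of t "drop (Suc 13) Rl" 25 "Rl!13"] lt drop_rows Rl_len Rl_nth_len[of 13] by simp
next
  show "length T13 = 24 - 13" by (simp add: T13_def)
next
  show "wt (xorv (Rl!13) (sumrows 25 T13 (drop (Suc 13) Rl))) = 8" by code_simp
qed simp

lemma pd14: "partial_dist 25 (lin_kernel 25 (Am Rl)) 14 = 8"
proof (rule pd_eq)
  fix t :: "bool list" assume lt: "length t = 24 - 14"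
  have "mw (Rl!14) (drop (Suc 14) Rl) = 8" by code_simp
  then show "8 \<le> wt (xorv (Rl!14) (sumrows 25 t (drop (Suc 14) Rl)))"
    using mw_le[of t "drop (Suc 14) Rl" 25 "Rl!14"] lt drop_rows Rl_len Rl_nth_len[of 14] by simp
next
  show "length T14 = 24 - 14" by (simp add: T14_def)
next
  show "wt (xorv (Rl!14) (sumrows 25 T14 (drop (Suc 14) Rl))) = 8" by code_simp
qed simp

lemma pd15: "partial_dist 25 (lin_kernel 25 (Am Rl)) 15 = 8"
proof (rule pd_eq)
  fix t :: "bool list" assume lt: "length t = 24 - 15"
  have "mw (Rl!15) (drop (Suc 15) Rl) = 8" by code_simp
  then show "8 \<le> wt (xorv (Rl!15) (sumrows 25 t (drop (Suc 15) Rl)))"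
    using mw_le[of t "drop (Suc 15) Rl" 25 "Rl!15"] lt drop_rows Rl_len Rl_nth_len[of 15] by simp
next
  show "length T15 = 24 - 15" by (simp add: T15_def)
next
  show "wt (xorv (Rl!15) (sumrows 25 T15 (drop (Suc 15) Rl))) = 8" by code_simp
qed simp

lemma pd16: "partial_dist 25 (lin_kernel 25 (Am Rl)) 16 = 8"
proof (rule pd_eq)
  fix t :: "bool list" assume lt: "length t = 24 - 16"
  have "mw (Rl!16) (drop (Suc 16) Rl) = 8" by code_simp
  then show "8 \<le> wt (xorv (Rl!16) (sumrows 25 t (drop (Suc 16) Rl)))"
    using mw_le[of t "drop (Suc 16) Rl" 25 "Rl!16"] lt drop_rows Rl_len Rl_nth_len[of 16] by simp
next
  show "length T16 = 24 - 16" by (simp add: T16_def)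
next
  show "wt (xorv (Rl!16) (sumrows 25 T16 (drop (Suc 16) Rl))) = 8" by code_simp
qed simp

lemma pd17: "partial_dist 25 (lin_kernel 25 (Am Rl)) 17 = 8"
proof (rule pd_eq)
  fix t :: "bool list" assume lt: "length t = 24 - 17"
  have "mw (Rl!17) (drop (Suc 17) Rl) = 8" by code_simp
  then show "8 \<le> wt (xorv (Rl!17) (sumrows 25 t (drop (Suc 17) Rl)))"
    using mw_le[of t "drop (Suc 17) Rl" 25 "Rl!17"] lt drop_rows Rl_len Rl_nth_len[of 17] by simp
next
  show "length T17 = 24 - 17" by (simp add: T17_def)
next
  show "wt (xorv (Rl!17) (sumrows 25 T17 (drop (Suc 17) Rl))) = 8" by code_simp
qed simp

lemma pd18: "partial_dist 25 (lin_kernel 25 (Am Rl)) 18 = 8"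
proof (rule pd_eq)
  fix t :: "bool list" assume lt: "length t = 24 - 18"
  have "mw (Rl!18) (drop (Suc 18) Rl) = 8" by code_simp
  then show "8 \<le> wt (xorv (Rl!18) (sumrows 25 t (drop (Suc 18) Rl)))"
    using mw_le[of t "drop (Suc 18) Rl" 25 "Rl!18"] lt drop_rows Rl_len Rl_nth_len[of 18] by simp
next
  show "length T18 = 24 - 18" by (simp add: T18_def)
next
  show "wt (xorv (Rl!18) (sumrows 25 T18 (drop (Suc 18) Rl))) = 8" by code_simp
qed simp

lemma pd19: "partial_dist 25 (lin_kernel 25 (Am Rl)) 19 = 8"
proof (rule pd_eq)
  fix t :: "bool list" assume lt: "length t = 24 - 19"
  have "mw (Rl!19) (drop (Suc 19) Rl) = 8" by code_simp
  then show "8 \<le> wt (xorv (Rl!19) (sumrows 25 t (drop (Suc 19) Rl)))"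
    using mw_le[of t "drop (Suc 19) Rl" 25 "Rl!19"] lt drop_rows Rl_len Rl_nth_len[of 19] by simp
next
  show "length T19 = 24 - 19" by (simp add: T19_def)
next
  show "wt (xorv (Rl!19) (sumrows 25 T19 (drop (Suc 19) Rl))) = 8" by code_simp
qed simp

lemma pd20: "partial_dist 25 (lin_kernel 25 (Am Rl)) 20 = 12"
proof (rule pd_eq)
  fix t :: "bool list" assume lt: "length t = 24 - 20"
  have "mw (Rl!20) (drop (Suc 20) Rl) = 12" by code_simp
  then show "12 \<le> wt (xorv (Rl!20) (sumrows 25 t (drop (Suc 20) Rl)))"
    using mw_le[of t "drop (Suc 20) Rl" 25 "Rl!20"] lt drop_rows Rl_len Rl_nth_len[of 20] by simp
next
  show "length T20 = 24 - 20" by (simp add: T20_def)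
next
  show "wt (xorv (Rl!20) (sumrows 25 T20 (drop (Suc 20) Rl))) = 12" by code_simp
qed simp

lemma pd21: "partial_dist 25 (lin_kernel 25 (Am Rl)) 21 = 12"
proof (rule pd_eq)
  fix t :: "bool list" assume lt: "length t = 24 - 21"
  have "mw (Rl!21) (drop (Suc 21) Rl) = 12" by code_simp
  then show "12 \<le> wt (xorv (Rl!21) (sumrows 25 t (drop (Suc 21) Rl)))"
    using mw_le[of t "drop (Suc 21) Rl" 25 "Rl!21"] lt drop_rows Rl_len Rl_nth_len[of 21] by simp
next
  show "length T21 = 24 - 21" by (simp add: T21_def)
next
  show "wt (xorv (Rl!21) (sumrows 25 T21 (drop (Suc 21) Rl))) = 12" by code_simp
qed simp

lemma pd22: "partial_dist 25 (lin_kernel 25 (Am Rl)) 22 = 12"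
proof (rule pd_eq)
  fix t :: "bool list" assume lt: "length t = 24 - 22"
  have "mw (Rl!22) (drop (Suc 22) Rl) = 12" by code_simp
  then show "12 \<le> wt (xorv (Rl!22) (sumrows 25 t (drop (Suc 22) Rl)))"
    using mw_le[of t "drop (Suc 22) Rl" 25 "Rl!22"] lt drop_rows Rl_len Rl_nth_len[of 22] by simp
next
  show "length T22 = 24 - 22" by (simp add: T22_def)
next
  show "wt (xorv (Rl!22) (sumrows 25 T22 (drop (Suc 22) Rl))) = 12" by code_simp
qed simp

lemma pd23: "partial_dist 25 (lin_kernel 25 (Am Rl)) 23 = 16"
proof (rule pd_eq)
  fix t :: "bool list" assume lt: "length t = 24 - 23"
  have "mw (Rl!23) (drop (Suc 23) Rl) = 16" by code_simp
  then show "16 \<le> wt (xorv (Rl!23) (sumrows 25 t (drop (Suc 23) Rl)))"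
    using mw_le[of t "drop (Suc 23) Rl" 25 "Rl!23"] lt drop_rows Rl_len Rl_nth_len[of 23] by simp
next
  show "length T23 = 24 - 23" by (simp add: T23_def)
next
  show "wt (xorv (Rl!23) (sumrows 25 T23 (drop (Suc 23) Rl))) = 16" by code_simp
qed simp

lemma pd24: "partial_dist 25 (lin_kernel 25 (Am Rl)) 24 = 16"
proof (rule pd_eq)
  fix t :: "bool list" assume lt: "length t = 24 - 24"
  have "mw (Rl!24) (drop (Suc 24) Rl) = 16" by code_simp
  then show "16 \<le> wt (xorv (Rl!24) (sumrows 25 t (drop (Suc 24) Rl)))"
    using mw_le[of t "drop (Suc 24) Rl" 25 "Rl!24"] lt drop_rows Rl_len Rl_nth_len[of 24] by simp
next
  show "length T24 = 24 - 24" by (simp add: T24_def)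
next
  show "wt (xorv (Rl!24) (sumrows 25 T24 (drop (Suc 24) Rl))) = 16" by code_simp
qed simp

lemma pd_all: assumes "i < 25" shows "partial_dist 25 (lin_kernel 25 (Am Rl)) i = D25 ! i"
proof -
  have u: "[0..<25] = [0,1,2,3,4,5,6,7,8,9,10,11,12,13,14,15,16,17,18,19,20,21,22,23,24]" by code_simp
  have "\<forall>i\<in>set [0..<25]. partial_dist 25 (lin_kernel 25 (Am Rl)) i = D25 ! i"
    unfolding u by (simp del: One_nat_def add: D25_def pd0 pd1 pd2 pd3 pd4 pd5 pd6 pd7 pd8 pd9 pd10 pd11 pd12 pd13
       pd14 pd15 pd16 pd17 pd18 pd19 pd20 pd21 pd22 pd23 pd24)
  then show ?thesis using assms by (simp del: One_nat_def)
qed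

lemma prod1: "map (\<lambda>r. sumrows 25 r Sl) Rl = Idl 25" by code_simp
lemma prod2: "map (\<lambda>r. sumrows 25 r Rl) Sl = Idl 25" by code_simp

lemma Idl_nth: "i < n \<Longrightarrow> j < n \<Longrightarrow> Idl n ! i ! j = (i = j)"
  by (simp add: Idl_def)

lemma Idl_len: "length (Idl n) = n" "\<forall>r\<in>set (Idl n). length r = n"
  by (auto simp: Idl_def)

lemma sumrows_Idl: assumes "length z = n" shows "sumrows n z (Idl n) = z"
proof -
  have "sumrows n z (Idl n) = vec_mat n z (Am (Idl n))"
    using assms Idl_len by (intro vec_mat_sumrows[symmetric]) auto
  also have "\<dots> = z"
  proof (rule nth_equalityI)
    show "length (vec_mat n z (Am (Idl n))) = length z" using assms by simp
  next
    fix j assume "j < length (vec_mat n z (Am (Idl n)))"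
    then have j: "j < n" by simp
    have "{i. i < n \<and> z ! i \<and> Am (Idl n) i j} = (if z ! j then {j} else {})"
      using j by (auto simp: Am_def Idl_nth)
    then show "vec_mat n z (Am (Idl n)) ! j = z ! j"
      using j by (simp add: vec_mat_nth)
  qed
  finally show ?thesis .
qed

lemma mm_vec: "j < l \<Longrightarrow> mat_mult2 l (Am R) B i j = vec_mat l (R!i) B ! j"
  by (simp add: mat_mult2_def vec_mat_nth Am_def)

lemma Sl_nth_len: "i < 25 \<Longrightarrow> length (Sl!i) = 25"
  using Sl_rows Sl_len by (metis nth_mem)

lemma inv_ok: "invertible2 25 (Am Rl)"
  unfolding invertible2_def
proof (intro exI[of _ "Am Sl"] allI impI conjI)
  fix i j :: nat assume i: "i < 25" and j: "j < 25"
  have "mat_mult2 25 (Am Rl) (Am Sl) i j = sumrows 25 (Rl!i) Sl ! j"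
    using mm_vec[OF j] vec_mat_sumrows[of "Rl!i" 25 Sl] Rl_nth_len[OF i] Sl_len Sl_rows by simp
  also have "\<dots> = Idl 25 ! i ! j" using prod1 i Rl_len by (metis nth_map)
  finally show "mat_mult2 25 (Am Rl) (Am Sl) i j = (i = j)" using i j by (simp add: Idl_nth)
  have "mat_mult2 25 (Am Sl) (Am Rl) i j = sumrows 25 (Sl!i) Rl ! j"
    using mm_vec[OF j] vec_mat_sumrows[of "Sl!i" 25 Rl] Sl_nth_len[OF i] Rl_len Rl_rows by simp
  also have "\<dots> = Idl 25 ! i ! j" using prod2 i Sl_len by (metis nth_map)
  finally show "mat_mult2 25 (Am Sl) (Am Rl) i j = (i = j)" using i j by (simp add: Idl_nth)
qed

lemma lkS_sumrows: "length z = 25 \<Longrightarrow> lin_kernel 25 (Am Sl) z = sumrows 25 z Sl"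
  unfolding lin_kernel_def using Sl_len Sl_rows by (intro vec_mat_sumrows) auto

lemma comp1: "length x = 25 \<Longrightarrow> lin_kernel 25 (Am Sl) (lin_kernel 25 (Am Rl) x) = x"
proof -
  assume x: "length x = 25"
  have "lin_kernel 25 (Am Sl) (lin_kernel 25 (Am Rl) x) = sumrows 25 (sumrows 25 x Rl) Sl"
    using x Rl_rows by (simp add: lk_sumrows lkS_sumrows)
  also have "\<dots> = sumrows 25 x (map (\<lambda>r. sumrows 25 r Sl) Rl)"
    using sumrows_sumrows[of x Rl Sl 25] x Rl_len Rl_rows Sl_len Sl_rows by simp
  also have "\<dots> = x" using x by (simp add: prod1 sumrows_Idl)
  finally show ?thesis .
qed

lemma comp2: "length x = 25 \<Longrightarrow> lin_kernel 25 (Am Rl) (lin_kernel 25 (Am Sl) x) = x"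
proof -
  assume x: "length x = 25"
  have "lin_kernel 25 (Am Rl) (lin_kernel 25 (Am Sl) x) = sumrows 25 (sumrows 25 x Sl) Rl"
    using x Sl_rows by (simp add: lk_sumrows lkS_sumrows)
  also have "\<dots> = sumrows 25 x (map (\<lambda>r. sumrows 25 r Rl) Sl)"
    using sumrows_sumrows[of x Sl Rl 25] x Rl_len Rl_rows Sl_len Sl_rows by simp
  also have "\<dots> = x" using x by (simp add: prod2 sumrows_Idl)
  finally show ?thesis .
qed

lemma kernel_A: "kernel 25 (lin_kernel 25 (Am Rl))"
  unfolding kernel_def
proof (rule bij_betw_byWitness[where f'="lin_kernel 25 (Am Sl)"])
  show "\<forall>a\<in>bvecs 25. lin_kernel 25 (Am Sl) (lin_kernel 25 (Am Rl) a) = a"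
    by (simp add: bvecs_def comp1)
  show "\<forall>a\<in>bvecs 25. lin_kernel 25 (Am Rl) (lin_kernel 25 (Am Sl) a) = a"
    by (simp add: bvecs_def comp2)
  show "lin_kernel 25 (Am Rl) ` bvecs 25 \<subseteq> bvecs 25"
    by (auto simp: bvecs_def lin_kernel_def)
  show "lin_kernel 25 (Am Sl) ` bvecs 25 \<subseteq> bvecs 25"
    by (auto simp: bvecs_def lin_kernel_def)
qed

lemma bvecs_fin: "finite (bvecs l)"
proof -
  have "bvecs l = {xs. set xs \<subseteq> UNIV \<and> length xs = l}" by (simp add: bvecs_def)
  then show ?thesis using finite_lists_length_eq[of "UNIV :: bool set" l] by simp
qed

lemma pd_restrict: assumes "i < l"
  shows "partial_dist l (restrict g (bvecs l)) i = partial_dist l g i"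
proof -
  have mem: "w @ b # u \<in> bvecs l" if "length w = i" "length u = l - i - 1" for w u b
    using that assms by (simp add: bvecs_def)
  show ?thesis unfolding partial_dist_def
  proof (intro arg_cong[where f=Min] Collect_cong iffI)
    fix x
    assume "\<exists>w u v. x = hamming (restrict g (bvecs l) (w @ [False] @ u)) (restrict g (bvecs l) (w @ [True] @ v)) \<and>
       length w = i \<and> length u = l - i - 1 \<and> length v = l - i - 1"
    then obtain w u v where h: "x = hamming (restrict g (bvecs l) (w @ [False] @ u)) (restrict g (bvecs l) (w @ [True] @ v))"
       "length w = i" "length u = l - i - 1" "length v = l - i - 1" by blast
    then show "\<exists>w u v. x = hamming (g (w @ [False] @ u)) (g (w @ [True] @ v)) \<and>
       length w = i \<and> length u = l - i - 1 \<and> length v = l - i - 1"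
      using h by (rule_tac exI[of _ w], rule_tac exI[of _ u], rule_tac exI[of _ v]) (simp add: mem)
  next
    fix x
    assume "\<exists>w u v. x = hamming (g (w @ [False] @ u)) (g (w @ [True] @ v)) \<and>
       length w = i \<and> length u = l - i - 1 \<and> length v = l - i - 1"
    then obtain w u v where h: "x = hamming (g (w @ [False] @ u)) (g (w @ [True] @ v))"
       "length w = i" "length u = l - i - 1" "length v = l - i - 1" by blast
    then show "\<exists>w u v. x = hamming (restrict g (bvecs l) (w @ [False] @ u)) (restrict g (bvecs l) (w @ [True] @ v)) \<and>
       length w = i \<and> length u = l - i - 1 \<and> length v = l - i - 1"
      using h by (rule_tac exI[of _ w], rule_tac exI[of _ u], rule_tac exI[of _ v]) (simp add: mem)
  qed
qed

lemma ke_restrict: "kernel_exponent l (restrict g (bvecs l)) = kernel_exponent l g"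
  unfolding kernel_exponent_def by (simp add: pd_restrict)

lemma max_ge: "kernel l g \<Longrightarrow> kernel_exponent l g \<le> max_exponent l"
proof -
  assume k: "kernel l g"
  let ?K = "{kernel_exponent l g | g. kernel l g}"
  have "?K \<subseteq> kernel_exponent l ` (bvecs l \<rightarrow>\<^sub>E bvecs l)"
  proof
    fix x assume "x \<in> ?K"
    then obtain h where x: "x = kernel_exponent l h" and h: "kernel l h" by blast
    have "restrict h (bvecs l) \<in> bvecs l \<rightarrow>\<^sub>E bvecs l"
      using h bij_betw_imp_funcset[of h "bvecs l" "bvecs l"] unfolding kernel_def
      by (auto simp: restrict_PiE_iff)
    then show "x \<in> kernel_exponent l ` (bvecs l \<rightarrow>\<^sub>E bvecs l)"
      using x ke_restrict[of l h] by (metis image_eqI)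
  qed
  moreover have "finite (kernel_exponent l ` (bvecs l \<rightarrow>\<^sub>E bvecs l))"
    by (intro finite_imageI finite_PiE bvecs_fin)
  ultimately have "finite ?K" by (rule finite_subset)
  moreover have "kernel_exponent l g \<in> ?K" using k by blast
  ultimately show ?thesis unfolding max_exponent_def by (rule Max_ge)
qed

theorem mainTheorem13:
  shows "(\<exists>A. invertible2 25 A \<and>
            (\<forall>i<25. partial_dist 25 (lin_kernel 25 A) i = D25 ! i))
         \<and> max_exponent 25 \<ge> (1 / 25) * (\<Sum>i<25. log 25 (real (D25 ! i)))"
proof
  show "\<exists>A. invertible2 25 A \<and> (\<forall>i<25. partial_dist 25 (lin_kernel 25 A) i = D25 ! i)"
    using inv_ok pd_all by blast
  have "kernel_exponent 25 (lin_kernel 25 (Am Rl)) = (1 / 25) * (\<Sum>i<25. log 25 (real (D25 ! i)))"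
    unfolding kernel_exponent_def by (simp add: pd_all)
  then show "max_exponent 25 \<ge> (1 / 25) * (\<Sum>i<25. log 25 (real (D25 ! i)))"
    using max_ge[OF kernel_A] by simp
qed

end
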